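(* Let $p$ be an integer with $|p|>1$ and let $G=\mathbb{Z}[1/p]\rtimes\mathbb{Z}$ with multiplication $(f_1,c_1)(f_2,c_2)=(f_1+p^{-c_1}f_2,\,c_1+c_2)$. Let $C=\{(f_i,c_i)\}$ be a finite generating set of $G$ closed under inverses, let $c=\max\{c_i \mid (f_i,c_i)\in C\}$, and let $B(n)$ denote the set of elements of $G$ of word length at most $n$ with respect to $C$. Then there is a constant $M$ (depending on $p$ and $C$) such that for every $n\ge 0$ and every element $(f,0)\in B(n)$, either $|f|\le M|p|^{nc/4}$ or $\mathrm{denom}(f)\le M|p|^{nc/4}$. Further, for every such $(f,0)\in B(n)$, both $|f|\le M|p|^{nc/2}$ and $\mathrm{denom}(f)\le M|p|^{nc/2}$.
   Context: $G$ is isomorphic to the Baumslag-Solitar group $B_{1,p}=\langle a,t\mid t^{-1}at=a^p\rangle$. Every element of $\mathbb{Z}[1/p]$ has the form $m/p^{n}$ with $m,n\in\mathbb{Z}$. For $f\in\mathbb{Z}[1/p]$, $|f|$ is its usual absolute value, and the denominator $\mathrm{denom}(f)$ is $|p|^{n}$ where $n\ge 0$ is the least nonnegative integer such that $f=m/p^{n}$ for some integer $m$. *)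

theory Defs
  imports Complex_Main
begin

definition Zinv :: "int \<Rightarrow> rat set" where
  "Zinv p = {f. \<exists>m::int. \<exists>n::nat. f = of_int m / of_int p ^ n}"

definition BSgroup :: "int \<Rightarrow> (rat \<times> int) set" where
  "BSgroup p = Zinv p \<times> UNIV"

definition bs_mult :: "int \<Rightarrow> rat \<times> int \<Rightarrow> rat \<times> int \<Rightarrow> rat \<times> int" where
  "bs_mult p x y = (fst x + (of_int p) powi (- snd x) * fst y, snd x + snd y)"

definition bs_one :: "rat \<times> int" where
  "bs_one = (0, 0)"

definition bs_inv :: "int \<Rightarrow> rat \<times> int \<Rightarrow> rat \<times> int" where
  "bs_inv p x = (- ((of_int p) powi (snd x) * fst x), - snd x)"

definition word_eval :: "int \<Rightarrow> (rat \<times> int) list \<Rightarrow> rat \<times> int" where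
  "word_eval p ws = foldr (bs_mult p) ws bs_one"

text \<open>C generates G (as a group); closure of C under inverses is assumed separately.\<close>
definition generates :: "int \<Rightarrow> (rat \<times> int) set \<Rightarrow> bool" where
  "generates p C \<longleftrightarrow> C \<subseteq> BSgroup p \<and>
     (\<forall>g \<in> BSgroup p. \<exists>ws. set ws \<subseteq> C \<union> bs_inv p ` C \<and> word_eval p ws = g)"

definition ball :: "int \<Rightarrow> (rat \<times> int) set \<Rightarrow> nat \<Rightarrow> (rat \<times> int) set" where
  "ball p C n = {word_eval p ws | ws. set ws \<subseteq> C \<and> length ws \<le> n}"

definition denom :: "int \<Rightarrow> rat \<Rightarrow> real" where
  "denom p f = real_of_int \<bar>p\<bar> ^ (LEAST n::nat. \<exists>m::int. f = of_int m / of_int p ^ n)"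

end

theory Submission
  imports Defs
begin

lemma of_rat_powi: "(of_rat (x powi k) :: real) = of_rat x powi k"
  by (simp add: power_int_def of_rat_power of_rat_inverse)

lemma abs_pow_rat: "p \<noteq> 0 \<Longrightarrow> \<bar>real_of_rat ((of_int p) powi k)\<bar> = real_of_int \<bar>p\<bar> powr real_of_int k"
  by (simp add: of_rat_powi power_int_abs powr_real_of_int')

lemma eval_Nil: "word_eval p [] = (0,0)"
  by (simp add: word_eval_def bs_one_def)

lemma eval_Cons: "word_eval p (g # ws) = bs_mult p g (word_eval p ws)"
  by (simp add: word_eval_def)

lemma snd_eval: "snd (word_eval p ws) = sum_list (map snd ws)"
  by (induction ws) (auto simp: eval_Nil eval_Cons bs_mult_def)

lemma eval_append:
  assumes "p \<noteq> 0"
  shows "word_eval p (u @ v) = bs_mult p (word_eval p u) (word_eval p v)"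
proof (induction u)
  case Nil
  then show ?case by (simp add: eval_Nil bs_mult_def)
next
  case (Cons g u)
  have e: "(of_int p::rat) powi (- a - b) = of_int p powi (-a) * of_int p powi (-b)" for a b
    using assms by (metis diff_conv_add_uminus power_int_add of_int_eq_0_iff)
  show ?case using assms
    by (simp add: eval_Cons Cons bs_mult_def e algebra_simps)
qed

fun pk :: "(rat \<times> int) list \<Rightarrow> int" where
  "pk [] = 0"
| "pk (g # w) = max 0 (snd g + pk w)"

lemma pk_nonneg: "pk w \<ge> 0"
  by (cases w) auto

lemma pk_split: "\<exists>u v. w = u @ v \<and> sum_list (map snd u) = pk w"
proof (induction w)
  case Nil
  then show ?case by auto
next
  case (Cons g w)
  then obtain u v where uv: "w = u @ v" "sum_list (map snd u) = pk w" by blast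
  show ?case
  proof (cases "snd g + pk w \<ge> 0")
    case True
    then show ?thesis using uv by (intro exI[of _ "g # u"] exI[of _ v]) auto
  next
    case False
    then show ?thesis by (intro exI[of _ "[]"] exI[of _ "g # w"]) auto
  qed
qed

lemma snd_bound:
  assumes "\<forall>g\<in>set ws. \<bar>snd g\<bar> \<le> c"
  shows "\<bar>sum_list (map snd ws)\<bar> \<le> c * int (length ws)"
  using assms by (induction ws) (auto simp: algebra_simps)

lemma lemT:
  fixes p :: int and C :: "(rat \<times> int) set" and c :: int and F K L :: real
  defines "q \<equiv> real_of_int \<bar>p\<bar>"
  assumes p: "\<bar>p\<bar> > 1"
    and hC: "\<forall>g\<in>C. \<bar>real_of_rat (fst g)\<bar> \<le> F \<and> \<bar>snd g\<bar> \<le> c"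
    and c1: "c \<ge> 1"
    and L0: "L \<ge> 0" and hL: "F + L \<le> q powr c * L"
    and hKL: "K \<ge> L"
    and hKD: "F + L \<le> K * (q powr (- c) * (q powr (1/2) - 1))"
  shows "set ws \<subseteq> C \<Longrightarrow> \<bar>real_of_rat (fst (word_eval p ws))\<bar> \<le>
     K * q powr ((real_of_int c * real (length ws) - real_of_int (snd (word_eval p ws))) / 2) - L"
proof (induction ws)
  case Nil
  have "q > 0" using p unfolding q_def by simp
  then show ?case using hKL by (simp add: eval_Nil)
next
  case (Cons g w)
  have q1: "q > 1" using p by (simp add: q_def)
  have p0: "p \<noteq> 0" using p by auto
  define t where "t = snd g"
  define S where "S = snd (word_eval p w)"
  define f where "f = fst (word_eval p w)"
  define n where "n = length w"
  have gC: "g \<in> C" and wC: "set w \<subseteq> C" using Cons.prems by auto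
  have Fg: "\<bar>real_of_rat (fst g)\<bar> \<le> F" and tc: "\<bar>t\<bar> \<le> c" using hC gC by (auto simp: t_def)
  have IH: "\<bar>real_of_rat f\<bar> \<le> K * q powr ((real_of_int c * real n - real_of_int S) / 2) - L"
    using Cons.IH wC by (simp add: f_def S_def n_def)
  have Sb: "\<bar>S\<bar> \<le> c * int n"
    using snd_bound[of w c] hC wC by (auto simp: S_def n_def snd_eval)
  define E0 where "E0 = (real_of_int c * real n - real_of_int S) / 2"
  have "c * int n - S \<ge> 0" using Sb by linarith
  then have "real_of_int (c * int n - S) \<ge> 0" by linarith
  then have E0: "E0 \<ge> 0" unfolding E0_def by simp
  define P where "P = q powr E0"
  have P1: "P \<ge> 1" using q1 E0 unfolding P_def by (simp add: ge_one_powr_ge_zero)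
  define X where "X = q powr ((real_of_int c - real_of_int t) / 2)"
  define Y where "Y = q powr (- real_of_int t)"
  have Y0: "Y \<ge> 0" unfolding Y_def by simp
  have ev: "word_eval p (g # w) = (fst g + (of_int p) powi (- t) * f, t + S)"
    by (simp add: eval_Cons bs_mult_def t_def f_def S_def)
  have "\<bar>real_of_rat (fst (word_eval p (g # w)))\<bar> \<le> \<bar>real_of_rat (fst g)\<bar> + Y * \<bar>real_of_rat f\<bar>"
  proof -
    have "real_of_rat (fst (word_eval p (g # w))) = real_of_rat (fst g) + real_of_rat (of_int p powi -t) * real_of_rat f"
      by (simp add: ev of_rat_add of_rat_mult)
    then have "\<bar>real_of_rat (fst (word_eval p (g # w)))\<bar> \<le> \<bar>real_of_rat (fst g)\<bar> + \<bar>real_of_rat (of_int p powi -t)\<bar> * \<bar>real_of_rat f\<bar>"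
      by (metis abs_mult abs_triangle_ineq)
    then show ?thesis unfolding abs_pow_rat[OF p0] Y_def q_def by simp
  qed
  also have "\<dots> \<le> F + Y * (K * P - L)"
    using Fg IH Y0 unfolding P_def E0_def by (simp add: add_mono mult_left_mono)
  also have "\<dots> \<le> K * P * X - L"
  proof (cases "t = - c")
    case True
    then have "X = q powr c" "Y = q powr c" unfolding X_def Y_def by simp_all
    then show ?thesis using hL by (simp add: algebra_simps)
  next
    case False
    then have tc': "t \<ge> 1 - c" using tc by auto
    have XY: "X = Y * q powr ((real_of_int c + real_of_int t) / 2)"
      unfolding X_def Y_def by (simp add: powr_add[symmetric] field_simps)
    have "q powr ((real_of_int c + real_of_int t) / 2) \<ge> q powr (1/2)"
      using q1 tc' by (intro powr_mono) auto
    then have "X - Y \<ge> Y * (q powr (1/2) - 1)" using XY Y0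
      by (simp add: algebra_simps mult_left_mono)
    moreover have "Y \<ge> q powr (- c)" unfolding Y_def using q1 tc by (intro powr_mono) auto
    moreover have "q powr (1/2) - 1 \<ge> 0" using q1 by (simp add: ge_one_powr_ge_zero)
    ultimately have D: "X - Y \<ge> q powr (- c) * (q powr (1/2) - 1)"
      by (smt (verit) mult_right_mono)
    have K0: "K \<ge> 0" using hKL L0 by simp
    have Dn: "q powr (- c) * (q powr (1/2) - 1) \<ge> 0"
      using \<open>q powr (1/2) - 1 \<ge> 0\<close> by simp
    have "K * (q powr (- c) * (q powr (1/2) - 1)) \<le> K * (X - Y)" using D K0 by (simp add: mult_left_mono)
    also have "\<dots> \<le> P * (K * (X - Y))"
    proof -
      have "0 \<le> K * (X - Y)" using K0 D Dn by simp
      from mult_right_mono[OF P1 this] show ?thesis by simp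
    qed
    finally have h1: "F + L \<le> P * (K * (X - Y))" using hKD by simp
    have h2: "P * (K * (X - Y)) = K * P * X - Y * (K * P)" by (simp add: algebra_simps)
    have h3: "Y * L \<ge> 0" using Y0 L0 by simp
    have h4: "Y * (K * P - L) = Y * (K * P) - Y * L" by (simp add: algebra_simps)
    show ?thesis using h1 h2 h3 h4 by linarith
  qed
  also have "\<dots> = K * q powr ((real_of_int c * real (length (g # w)) - real_of_int (snd (word_eval p (g # w)))) / 2) - L"
  proof -
    have ex: "(real_of_int c * real (length (g # w)) - real_of_int (snd (word_eval p (g # w)))) / 2
        = E0 + (real_of_int c - real_of_int t) / 2"
      unfolding ev E0_def n_def by (simp add: field_simps)
    show ?thesis unfolding ex P_def X_def by (simp add: powr_add)
  qed
  finally show ?case .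
qed

lemma Ints_powi: "k \<ge> 0 \<Longrightarrow> (of_int p :: rat) powi k \<in> \<int>"
  by (simp add: power_int_def)

lemma lemD:
  fixes p :: int and C :: "(rat \<times> int) set" and N :: nat
  assumes p0: "p \<noteq> 0"
    and hN: "\<forall>g\<in>C. fst g * (of_int p) ^ N \<in> \<int>"
  shows "set ws \<subseteq> C \<Longrightarrow> fst (word_eval p ws) * (of_int p) powi (int N + pk ws) \<in> \<int>"
proof (induction ws)
  case Nil
  then show ?case by (simp add: eval_Nil)
next
  case (Cons g w)
  define x where "x = (of_int p :: rat)"
  have x0: "x \<noteq> 0" using p0 by (simp add: x_def)
  define t where "t = snd g"
  define A where "A = pk w"
  define f where "f = fst (word_eval p w)"
  define m where "m = max 0 (t + A)"
  have A0: "A \<ge> 0" unfolding A_def by (rule pk_nonneg)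
  have IH: "f * x powi (int N + A) \<in> \<int>" using Cons by (simp add: f_def x_def A_def)
  have gN: "fst g * x powi (int N) \<in> \<int>" using hN Cons.prems by (simp add: x_def)
  have ev: "fst (word_eval p (g # w)) = fst g + x powi (- t) * f"
    by (simp add: eval_Cons bs_mult_def t_def f_def x_def)
  have pkc: "pk (g # w) = m" by (simp add: m_def t_def A_def)
  have e1: "x powi (int N + m) = x powi (int N) * x powi m" using x0 by (simp add: power_int_add)
  have e2: "x powi (- t) * x powi (int N + m) = x powi (int N + A) * x powi (m - t - A)"
  proof -
    have "x powi (- t) * x powi (int N + m) = x powi (- t + (int N + m))" using x0 by (metis power_int_add)
    also have "- t + (int N + m) = (int N + A) + (m - t - A)" by simp
    also have "x powi \<dots> = x powi (int N + A) * x powi (m - t - A)" using x0 by (metis power_int_add)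
    finally show ?thesis .
  qed
  have "fst (word_eval p (g # w)) * x powi (int N + pk (g # w))
      = (fst g * x powi (int N)) * x powi m + (f * x powi (int N + A)) * x powi (m - t - A)"
    unfolding ev pkc using e1 e2 by (simp add: algebra_simps)
  also have "\<dots> \<in> \<int>"
  proof -
    have i1: "x powi m \<in> \<int>" unfolding x_def by (rule Ints_powi) (simp add: m_def)
    have i2: "x powi (m - t - A) \<in> \<int>" unfolding x_def by (rule Ints_powi) (simp add: m_def)
    show ?thesis by (rule Ints_add[OF Ints_mult[OF gN i1] Ints_mult[OF IH i2]])
  qed
  finally show ?case by (simp add: x_def)
qed

lemma denom_le:
  assumes p: "\<bar>p\<bar> > 1" and h: "f * (of_int p) ^ k = of_int z"
  shows "denom p f \<le> real_of_int \<bar>p\<bar> ^ k"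
proof -
  have p0: "(of_int p :: rat) ^ k \<noteq> 0" using p by auto
  have "f = of_int z / of_int p ^ k" using h p0 by (simp add: field_simps)
  then have "(LEAST n::nat. \<exists>m::int. f = of_int m / of_int p ^ n) \<le> k"
    by (intro Least_le) blast
  then show ?thesis unfolding denom_def using p by (intro power_increasing) auto
qed

lemma word_bound:
  fixes p :: int and C :: "(rat \<times> int) set" and c :: int and F K L :: real and N :: nat
  defines "q \<equiv> real_of_int \<bar>p\<bar>"
  assumes p: "\<bar>p\<bar> > 1"
    and hC: "\<forall>g\<in>C. \<bar>real_of_rat (fst g)\<bar> \<le> F \<and> \<bar>snd g\<bar> \<le> c"
    and c1: "c \<ge> 1"
    and L0: "L \<ge> 0" and hL: "F + L \<le> q powr c * L"
    and hKL: "K \<ge> L"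
    and hKD: "F + L \<le> K * (q powr (- c) * (q powr (1/2) - 1))"
    and hN: "\<forall>g\<in>C. fst g * (of_int p) ^ N \<in> \<int>"
    and ws: "set ws \<subseteq> C" and ev: "word_eval p ws = (f, 0)"
  shows "\<exists>A::int. 0 \<le> A \<and> 2 * A \<le> c * int (length ws) \<and>
     \<bar>real_of_rat f\<bar> \<le> 2 * K * q powr ((real_of_int c * real (length ws) - 2 * real_of_int A) / 2) \<and>
     denom p f \<le> q ^ N * q powr real_of_int A"
proof -
  have p0: "p \<noteq> 0" using p by auto
  have q1: "q > 1" using p by (simp add: q_def)
  obtain u v where uv: "ws = u @ v" and A: "sum_list (map snd u) = pk ws" by (metis pk_split)
  define A where "A = pk ws"
  have A0: "A \<ge> 0" unfolding A_def by (rule pk_nonneg)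
  define fu where "fu = fst (word_eval p u)"
  define fv where "fv = fst (word_eval p v)"
  define Sv where "Sv = snd (word_eval p v)"
  have Su: "snd (word_eval p u) = A" using A by (simp add: snd_eval A_def)
  have ev2: "(f, 0) = (fu + (of_int p) powi (- A) * fv, A + Sv)"
    using ev eval_append[OF p0, of u v] Su unfolding uv fu_def fv_def Sv_def
    by (simp add: bs_mult_def)
  then have f: "f = fu + (of_int p) powi (- A) * fv" and Sv: "Sv = - A" by auto
  have uC: "set u \<subseteq> C" and vC: "set v \<subseteq> C" using ws uv by auto
  have cb: "\<forall>g\<in>C. \<bar>snd g\<bar> \<le> c" using hC by auto
  have "\<forall>g\<in>set u. \<bar>snd g\<bar> \<le> c" using cb uC by auto
  from snd_bound[OF this] have "\<bar>A\<bar> \<le> c * int (length u)" using Su by (simp add: snd_eval)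
  then have Au: "A \<le> c * int (length u)" by linarith
  have "\<forall>g\<in>set v. \<bar>snd g\<bar> \<le> c" using cb vC by auto
  from snd_bound[OF this] have "\<bar>Sv\<bar> \<le> c * int (length v)" by (simp add: snd_eval Sv_def)
  then have Av: "A \<le> c * int (length v)" using Sv by linarith
  have len: "length ws = length u + length v" using uv by simp
  have Tu: "\<bar>real_of_rat fu\<bar> \<le> K * q powr ((real_of_int c * real (length u) - real_of_int A) / 2) - L"
    using lemT[OF p hC c1 L0 _ hKL, of u] hL hKD uC Su unfolding q_def fu_def by simp
  have Tv: "\<bar>real_of_rat fv\<bar> \<le> K * q powr ((real_of_int c * real (length v) + real_of_int A) / 2) - L"
    using lemT[OF p hC c1 L0 _ hKL, of v] hL hKD vC Sv unfolding q_def fv_def Sv_def by simp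
  define R where "R = (real_of_int c * real (length ws) - 2 * real_of_int A) / 2"
  have K0: "K \<ge> 0" using hKL L0 by simp
  have "\<bar>real_of_rat f\<bar> \<le> \<bar>real_of_rat fu\<bar> + \<bar>real_of_rat ((of_int p) powi (- A))\<bar> * \<bar>real_of_rat fv\<bar>"
  proof -
    have "real_of_rat f = real_of_rat fu + real_of_rat ((of_int p) powi (- A)) * real_of_rat fv"
      by (simp add: f of_rat_add of_rat_mult)
    then show ?thesis by (metis abs_mult abs_triangle_ineq)
  qed
  also have "\<dots> \<le> K * q powr ((real_of_int c * real (length u) - real_of_int A) / 2)
      + q powr (- real_of_int A) * (K * q powr ((real_of_int c * real (length v) + real_of_int A) / 2))"
  proof -
    have Tu': "\<bar>real_of_rat fu\<bar> \<le> K * q powr ((real_of_int c * real (length u) - real_of_int A) / 2)"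
      using Tu L0 by linarith
    have Tv': "\<bar>real_of_rat fv\<bar> \<le> K * q powr ((real_of_int c * real (length v) + real_of_int A) / 2)"
      using Tv L0 by linarith
    show ?thesis unfolding abs_pow_rat[OF p0] q_def[symmetric]
      using add_mono[OF Tu' mult_left_mono[OF Tv', of "q powr (- real_of_int A)"]] by simp
  qed
  also have "\<dots> = K * q powr ((real_of_int c * real (length u) - real_of_int A) / 2)
      + K * q powr ((real_of_int c * real (length v) - real_of_int A) / 2)"
  proof -
    have "q powr (- real_of_int A) * q powr ((real_of_int c * real (length v) + real_of_int A) / 2)
        = q powr ((real_of_int c * real (length v) - real_of_int A) / 2)"
      by (simp add: powr_add[symmetric] field_simps)
    then show ?thesis by (simp add: algebra_simps)
  qed
  also have "\<dots> \<le> K * q powr R + K * q powr R"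
  proof -
    have r1: "real_of_int A \<le> real_of_int c * real (length u)" "real_of_int A \<le> real_of_int c * real (length v)"
      using Au Av by (metis of_int_le_iff of_int_mult of_int_of_nat_eq)+
    have "(real_of_int c * real (length u) - real_of_int A) / 2 \<le> R"
         "(real_of_int c * real (length v) - real_of_int A) / 2 \<le> R"
      unfolding R_def len using r1 by (auto simp: field_simps)
    then show ?thesis using q1 K0
      by (intro add_mono mult_left_mono powr_mono) auto
  qed
  finally have fb: "\<bar>real_of_rat f\<bar> \<le> 2 * K * q powr R" by simp
  have "fst (word_eval p ws) * (of_int p) powi (int N + pk ws) \<in> \<int>"
    using lemD[OF p0 hN ws] .
  then obtain z where z: "f * (of_int p) powi (int N + A) = of_int z"
    using ev unfolding A_def by (auto elim: Ints_cases)
  have "(of_int p :: rat) powi (int N + A) = (of_int p) ^ (N + nat A)"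
    using A0 by (simp add: power_int_def nat_add_distrib)
  then have "denom p f \<le> q ^ (N + nat A)"
    using denom_le[OF p, of f "N + nat A" z] z unfolding q_def by simp
  also have "\<dots> = q ^ N * q powr real_of_int A"
    using q1 A0 by (simp add: power_add powr_real_of_int)
  finally have db: "denom p f \<le> q ^ N * q powr real_of_int A" .
  show ?thesis
    using A0 Au Av len fb db unfolding R_def
    by (intro exI[of _ A]) (auto simp: algebra_simps)
qed

lemma sum_zero_snd: "\<forall>g\<in>set ws. snd g = (0::int) \<Longrightarrow> sum_list (map snd ws) = 0"
  by (induction ws) auto

theorem lemma1:
  fixes p :: int and C :: "(rat \<times> int) set"
  assumes "\<bar>p\<bar> > 1"
    and "finite C"
    and "generates p C"
    and "\<forall>x \<in> C. bs_inv p x \<in> C"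
  defines "c \<equiv> Max (snd ` C)"
  shows "\<exists>M::real.
     (\<forall>n::nat. \<forall>f. (f, 0) \<in> ball p C n \<longrightarrow>
        (\<bar>real_of_rat f\<bar> \<le> M * real_of_int \<bar>p\<bar> powr (real n * real_of_int c / 4)
         \<or> denom p f \<le> M * real_of_int \<bar>p\<bar> powr (real n * real_of_int c / 4))) \<and>
     (\<forall>n::nat. \<forall>f. (f, 0) \<in> ball p C n \<longrightarrow>
        \<bar>real_of_rat f\<bar> \<le> M * real_of_int \<bar>p\<bar> powr (real n * real_of_int c / 2)
        \<and> denom p f \<le> M * real_of_int \<bar>p\<bar> powr (real n * real_of_int c / 2))"
proof -
  note p = assms(1) and fin = assms(2) and gen = assms(3) and inv = assms(4)
  define q where "q = real_of_int \<bar>p\<bar>"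
  have p0: "p \<noteq> 0" using p by auto
  have q1: "q > 1" using p by (simp add: q_def)
  have cb: "\<forall>g\<in>C. \<bar>snd g\<bar> \<le> c"
  proof
    fix g assume g: "g \<in> C"
    have "snd g \<le> c" unfolding c_def using fin g by (intro Max_ge) auto
    moreover have "snd (bs_inv p g) \<le> c" unfolding c_def using fin inv g by (intro Max_ge) auto
    ultimately show "\<bar>snd g\<bar> \<le> c" by (simp add: bs_inv_def)
  qed
  have c1: "c \<ge> 1"
  proof (rule ccontr)
    assume "\<not> c \<ge> 1"
    then have z: "\<forall>g\<in>C. snd g = 0" using cb by force
    have "(0, 1) \<in> BSgroup p" unfolding BSgroup_def Zinv_def
      by (auto intro!: exI[of _ 0])
    then obtain ws where ws: "set ws \<subseteq> C \<union> bs_inv p ` C" "word_eval p ws = (0, 1)"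
      using gen unfolding generates_def by blast
    have "\<forall>g\<in>set ws. snd g = 0" using ws(1) z by (auto simp: bs_inv_def)
    then have "sum_list (map snd ws) = 0" by (rule sum_zero_snd)
    moreover have "sum_list (map snd ws) = 1" using ws(2) snd_eval[of p ws] by simp
    ultimately show False by simp
  qed
  define F where "F = (\<Sum>g\<in>C. \<bar>real_of_rat (fst g)\<bar>)"
  have F0: "F \<ge> 0" unfolding F_def by (rule sum_nonneg) simp
  have hC: "\<forall>g\<in>C. \<bar>real_of_rat (fst g)\<bar> \<le> F \<and> \<bar>snd g\<bar> \<le> c"
    using cb fin unfolding F_def by (auto intro: member_le_sum)
  define ng where "ng g = (SOME n::nat. \<exists>m::int. fst g = of_int m / of_int p ^ n)" for g :: "rat \<times> int"
  define N where "N = (\<Sum>g\<in>C. ng g)"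
  have hN: "\<forall>g\<in>C. fst g * (of_int p) ^ N \<in> \<int>"
  proof
    fix g assume g: "g \<in> C"
    have "fst g \<in> Zinv p" using gen g unfolding generates_def BSgroup_def by auto
    then have "\<exists>n::nat. \<exists>m::int. fst g = of_int m / of_int p ^ n" unfolding Zinv_def by auto
    then have "\<exists>m::int. fst g = of_int m / of_int p ^ ng g" unfolding ng_def by (rule someI_ex)
    then obtain m where m: "fst g = of_int m / of_int p ^ ng g" by blast
    have le: "ng g \<le> N" unfolding N_def using fin g by (intro member_le_sum) auto
    have "(of_int p :: rat) ^ N = of_int p ^ ng g * of_int p ^ (N - ng g)"
      using le by (simp add: power_add[symmetric])
    then have "fst g * (of_int p) ^ N = of_int m * of_int p ^ (N - ng g)"
      using m p0 by simp
    also have "\<dots> \<in> \<int>" by simp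
    finally show "fst g * (of_int p) ^ N \<in> \<int>" .
  qed
  define L where "L = F / (q - 1)"
  define D where "D = q powr (- c) * (q powr (1/2) - 1)"
  define K where "K = (F + L) / D + L"
  have L0: "L \<ge> 0" unfolding L_def using F0 q1 by simp
  have qL: "q * L = F + L" unfolding L_def using q1 by (simp add: field_simps)
  have "q powr 1 \<le> q powr c" using q1 c1 by (intro powr_mono) auto
  then have "q \<le> q powr c" using q1 by simp
  then have hL: "F + L \<le> q powr c * L" using qL L0 by (metis mult_right_mono)
  have "q powr 0 < q powr (1/2)" using q1 by (intro powr_less_mono) auto
  then have D0: "D > 0" unfolding D_def using q1 by simp
  have hKL: "K \<ge> L" unfolding K_def using D0 F0 L0 by simp
  have hKD: "F + L \<le> K * D" unfolding K_def using D0 L0 by (simp add: field_simps)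
  define M where "M = 2 * K + q ^ N"
  have K0: "K \<ge> 0" using hKL L0 by simp
  have key: "\<exists>A::int. 0 \<le> A \<and> 2 * A \<le> c * int (length ws) \<and>
     \<bar>real_of_rat f\<bar> \<le> 2 * K * q powr ((real_of_int c * real (length ws) - 2 * real_of_int A) / 2) \<and>
     denom p f \<le> q ^ N * q powr real_of_int A"
    if "set ws \<subseteq> C" "word_eval p ws = (f, 0)" for ws f
    using word_bound[OF p hC c1 L0 _ hKL _ hN that] hL hKD unfolding q_def D_def by simp
  have main: "(\<bar>real_of_rat f\<bar> \<le> M * q powr (real n * real_of_int c / 4)
         \<or> denom p f \<le> M * q powr (real n * real_of_int c / 4)) \<and>
        \<bar>real_of_rat f\<bar> \<le> M * q powr (real n * real_of_int c / 2)
        \<and> denom p f \<le> M * q powr (real n * real_of_int c / 2)"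
    if inb: "(f, 0) \<in> ball p C n" for n f
  proof -
    obtain ws where ws: "(f, 0) = word_eval p ws" "set ws \<subseteq> C" "length ws \<le> n"
      using inb unfolding ball_def by blast
    obtain A where A: "0 \<le> A" "2 * A \<le> c * int (length ws)"
      and fb: "\<bar>real_of_rat f\<bar> \<le> 2 * K * q powr ((real_of_int c * real (length ws) - 2 * real_of_int A) / 2)"
      and db: "denom p f \<le> q ^ N * q powr real_of_int A"
      using key[of ws f] ws by auto
    define m where "m = length ws"
    have cr: "real_of_int c \<ge> 1" using c1 by simp
    have mn: "real_of_int c * real m \<le> real n * real_of_int c"
      using ws(3) cr unfolding m_def by (simp add: mult.commute mult_left_mono)
    have A2: "2 * real_of_int A \<le> real_of_int c * real m"
      using A(2) unfolding m_def by (metis of_int_le_iff of_int_mult of_int_of_nat_eq of_int_numeral)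
    have Ar: "real_of_int A \<ge> 0" using A by simp
    have M1: "2 * K \<le> M" "q ^ N \<le> M" unfolding M_def using K0 q1 by auto
    have pw: "q powr x \<le> q powr y" if "x \<le> y" for x y using q1 that by (intro powr_mono) auto
    have bnd1: "\<bar>real_of_rat f\<bar> \<le> M * q powr x" if "(real_of_int c * real m - 2 * real_of_int A) / 2 \<le> x" for x
    proof -
      have "\<bar>real_of_rat f\<bar> \<le> 2 * K * q powr x"
        using fb pw[OF that] K0 unfolding m_def by (smt (verit) mult_left_mono)
      also have "\<dots> \<le> M * q powr x" using M1 by (simp add: mult_right_mono)
      finally show ?thesis .
    qed
    have bnd2: "denom p f \<le> M * q powr x" if "real_of_int A \<le> x" for x
    proof -
      have "denom p f \<le> q ^ N * q powr x"
        using db pw[OF that] q1 by (smt (verit) mult_left_mono zero_le_power)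
      also have "\<dots> \<le> M * q powr x" using M1 by (simp add: mult_right_mono)
      finally show ?thesis .
    qed
    have P2: "\<bar>real_of_rat f\<bar> \<le> M * q powr (real n * real_of_int c / 2)"
      using mn Ar by (intro bnd1) (simp add: field_simps)
    have D2: "denom p f \<le> M * q powr (real n * real_of_int c / 2)"
      using mn A2 by (intro bnd2) (simp add: field_simps)
    have P1: "\<bar>real_of_rat f\<bar> \<le> M * q powr (real n * real_of_int c / 4)
         \<or> denom p f \<le> M * q powr (real n * real_of_int c / 4)"
    proof (cases "real_of_int A \<le> real n * real_of_int c / 4")
      case True
      then show ?thesis using bnd2 by blast
    next
      case False
      then show ?thesis using mn by (intro disjI1 bnd1) (simp add: field_simps)
    qed
    show ?thesis using P1 P2 D2 by blast
  qed
  show ?thesis unfolding q_def[symmetric] using main by blast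
qed

end
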